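(* Let $n>p=p_n$ and $r_n=(-\log(1-\frac pn))^{1/2}$. Assume $p/n\to y\in(0,1]$ and that the real sequences $s=s_n$, $t=t_n$ satisfy $s=O(1/r_n)$, $t=O(1/r_n)$ as $n\to\infty$. Then $$\log\frac{\Gamma_p(\frac n2+t)}{\Gamma_p(\frac n2+s)}=p(t-s)(\log n-1-\log2)+r_n^2\Big[(t^2-s^2)-\Big(p-n+\frac12\Big)(t-s)\Big]+o(1)$$ as $n\to\infty$.
   Context: $\Gamma$ is the Gamma function and, for complex $z$ with $\operatorname{Re}(z)>\frac12(p-1)$, the multivariate Gamma function is $\Gamma_p(z)=\pi^{p(p-1)/4}\prod_{i=1}^p\Gamma\big(z-\frac12(i-1)\big)$. *)

theory Defs
  imports "HOL-Analysis.Analysis" "HOL-Library.Landau_Symbols"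
begin

definition mvGamma :: "nat \<Rightarrow> real \<Rightarrow> real" where
  "mvGamma p z = pi powr (real p * (real p - 1) / 4) *
     (\<Prod>i\<in>{1..p}. Gamma (z - (real i - 1) / 2))"

definition rseq :: "(nat \<Rightarrow> nat) \<Rightarrow> nat \<Rightarrow> real" where
  "rseq p n = sqrt (- ln (1 - real (p n) / real n))"

end

theory Submission imports Defs "HOL-Real_Asymp.Real_Asymp" begin

lemma delta_bound:
  fixes x :: real assumes "x > 0"
  shows "\<bar>ln (x+1) - ln x - (1/x + 1/(x+1))/2\<bar> \<le> 1/(4*x^3)"
proof -
  have up: "ln (x+1) - ln x \<le> (1/x + 1/(x+1))/2"
    using ln_inverse_approx_le[of x 1] assms by (simp add: inverse_eq_divide)
  have lo: "ln (x+1) - ln x \<ge> 2/(2*x+1)"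
    using ln_inverse_approx_ge[of x "x+1"] assms by simp
  have eq: "(1/x + 1/(x+1))/2 - 2/(2*x+1) = 1/(2*x*(x+1)*(2*x+1))"
    using assms apply (subgoal_tac "x+1 \<noteq> 0" "2*x+1\<noteq>0")
    apply (simp add: divide_simps)
    apply (simp add: algebra_simps)
    by auto
  have "2*x*(x+1)*(2*x+1) \<ge> 4*x^3"
    using assms by (simp add: algebra_simps power3_eq_cube)
  hence "1/(2*x*(x+1)*(2*x+1)) \<le> 1/(4*x^3)"
    using assms by (intro divide_left_mono) (auto simp: mult_pos_pos)
  thus ?thesis using up lo eq by linarith
qed

lemma tel3:
  fixes y :: real assumes "y > 1/2"
  shows "1/y^3 \<le> 1/(2*(y-1/2)^2) - 1/(2*(y+1-1/2)^2)"
proof -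
  have yy0: "y*y > (1/2)*(1/2)" using assms by (intro mult_strict_mono) auto
  have yy: "y^2 > 1/4" "4*y^2 > 1" using yy0 by (auto simp: power2_eq_square)
  have e1: "1/(2*(y-1/2)^2) - 1/(2*(y+1-1/2)^2) = y/((y-1/2)^2*(y+1/2)^2)"
    using assms apply (subgoal_tac "y-1/2 \<noteq> 0" "y+1/2\<noteq>0")
    apply (simp add: divide_simps)
    apply (simp add: algebra_simps power2_eq_square)
    by auto
  have e2: "(y-1/2)^2*(y+1/2)^2 = (y^2 - 1/4)^2" by (simp add: algebra_simps power2_eq_square)
  have "y/((y^2-1/4)^2) \<ge> y/(y^2)^2"
    using assms yy by (intro divide_left_mono power_mono) (auto simp: power2_eq_square)
  thus ?thesis using e1 e2 assms by (simp add: power2_eq_square power3_eq_cube)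
qed

lemma tel2:
  fixes y :: real assumes "y > 1/2"
  shows "1/y^2 \<le> 1/(y-1/2) - 1/(y+1-1/2)"
proof -
  have yy0: "y*y > (1/2)*(1/2)" using assms by (intro mult_strict_mono) auto
  have yy: "y^2 > 1/4" "4*y^2 > 1" using yy0 by (auto simp: power2_eq_square)
  have e: "1/(y-1/2) - 1/(y+1-1/2) = 1/(y^2 - 1/4)"
    using assms yy apply (subgoal_tac "y-1/2 \<noteq> 0" "y+1/2\<noteq>0" "y^2-1/4 \<noteq> 0")
    apply (simp add: divide_simps)
    apply (simp add: algebra_simps power2_eq_square)
    by auto
  have "1/(y^2-1/4) \<ge> 1/y^2"
    using assms yy by (intro divide_left_mono) (auto simp: power2_eq_square)
  thus ?thesis using e by simp
qed

lemma tel1: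
  fixes y :: real assumes "y > 0"
  shows "1/y - 1/(y+1) \<le> 1/y^2"
  using assms by (simp add: divide_simps power2_eq_square)


lemma psi2_bound:
  fixes y :: real assumes y: "y > 1/2"
  shows "\<bar>Polygamma 2 y\<bar> \<le> 1/(y-1/2)^2"
proof -
  let ?f = "\<lambda>k::nat. inverse ((y + of_nat k)^3)"
  let ?F = "\<lambda>k::nat. 1/(2*(y + real k-1/2)^2)"
  have sm: "summable ?f" using Polygamma_converges'[of y 3] y by simp
  have "(\<Sum>k<M. ?f k) \<le> ?F 0" for M
  proof -
    have "(\<Sum>k<M. ?f k) \<le> (\<Sum>k<M. ?F k - ?F (Suc k))"
      using tel3[of "y + real _"] y by (intro sum_mono) (auto simp: inverse_eq_divide algebra_simps)
    also have "\<dots> = ?F 0 - ?F M" by (rule sum_lessThan_telescope')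
    also have "\<dots> \<le> ?F 0" by simp
    finally show ?thesis .
  qed
  hence "suminf ?f \<le> ?F 0" by (intro suminf_le_const sm)
  moreover have "suminf ?f \<ge> 0" using y by (intro suminf_nonneg sm) auto
  moreover have "Polygamma 2 y = - 2 * suminf ?f" by (simp add: Polygamma_def)
  ultimately show ?thesis by simp
qed

lemma psi1_bounds:
  fixes y :: real assumes y: "y > 1/2"
  shows "Polygamma 1 y \<le> 1/(y-1/2)" "Polygamma 1 y \<ge> 1/y"
proof -
  let ?f = "\<lambda>k::nat. inverse ((y + of_nat k)^2)"
  let ?F = "\<lambda>k::nat. 1/(y + real k-1/2)"
  have sm: "summable ?f" using Polygamma_converges'[of y 2] y by simp
  have P: "Polygamma 1 y = suminf ?f" by (simp add: Polygamma_def power2_eq_square)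
  have "(\<Sum>k<M. ?f k) \<le> ?F 0" for M
  proof -
    have "(\<Sum>k<M. ?f k) \<le> (\<Sum>k<M. ?F k - ?F (Suc k))"
      using tel2[of "y + real _"] y by (intro sum_mono) (auto simp: inverse_eq_divide algebra_simps)
    also have "\<dots> = ?F 0 - ?F M" by (rule sum_lessThan_telescope')
    also have "\<dots> \<le> ?F 0" using y by simp
    finally show ?thesis .
  qed
  hence "suminf ?f \<le> ?F 0" by (intro suminf_le_const sm)
  thus "Polygamma 1 y \<le> 1/(y-1/2)" using P by simp
  let ?G = "\<lambda>k::nat. 1/(y + real k)"
  have "?G \<longlonglongrightarrow> 0"
    by (intro tendsto_divide_0[OF tendsto_const] filterlim_at_top_imp_at_infinity filterlim_tendsto_add_at_top[OF tendsto_const] filterlim_real_sequentially)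
  hence ts: "(\<lambda>k. ?G k - ?G (Suc k)) sums (?G 0 - 0)" by (rule telescope_sums')
  have "suminf (\<lambda>k. ?G k - ?G (Suc k)) \<le> suminf ?f"
  proof (rule suminf_le)
    fix k show "?G k - ?G (Suc k) \<le> ?f k"
      using tel1[of "y + real k"] y by (simp add: inverse_eq_divide algebra_simps)
  qed (use ts sm in \<open>auto simp: sums_iff\<close>)
  thus "Polygamma 1 y \<ge> 1/y" using P ts by (simp add: sums_iff)
qed


lemma lnlim: fixes x :: real assumes "x > 0"
  shows "(\<lambda>M. ln (x + real M) - ln (real M) - 1/(2*(x + real M))) \<longlonglongrightarrow> 0"
  using assms by real_asymp

lemma digamma_approx:
  fixes x :: real assumes x: "x \<ge> 1"
  shows "\<bar>Digamma x - ln x + 1/(2*x)\<bar> \<le> 1/(2*x^2)"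
proof -
  define d where "d = (\<lambda>z::real. ln (z+1) - ln z - (1/z + 1/(z+1))/2)"
  define b where "b = (\<lambda>M. \<Sum>n<M. d (x + real n))"
  have L: "(\<lambda>M. ln (real M) - (\<Sum>n<M. inverse (x + real n))) \<longlonglongrightarrow> Digamma x"
    using Digamma_LIMSEQ[of x] x by simp
  have bid: "b M = ln (x + real M) - ln x - (\<Sum>n<M. inverse (x + real n)) + 1/(2*x) - 1/(2*(x + real M))" for M
  proof (induction M)
    case 0 then show ?case by (simp add: b_def)
  next
    case (Suc M)
    have "b (Suc M) = b M + d (x + real M)" by (simp add: b_def)
    also note Suc
    finally have e: "b (Suc M) = ln (x + real M) - ln x - (\<Sum>n<M. inverse (x + real n)) + 1/(2*x) - 1/(2*(x + real M)) + d (x + real M)" .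
    have h: "1/(2*(x+real M)) + (1/(x+real M) + 1/(x+real M+1))/2 = 1/(x+real M) + 1/(2*(x+real M+1))"
      using x apply (subgoal_tac "x + real M \<noteq> 0" "x + real M + 1 \<noteq> 0")
      apply (simp add: divide_simps)
      apply (simp add: algebra_simps)
      by auto
    show ?case using e h by (simp add: d_def inverse_eq_divide algebra_simps)
  qed
  have "(\<lambda>M. (ln (real M) - (\<Sum>n<M. inverse (x + real n))) - ln x + 1/(2*x)
           + (ln (x + real M) - ln (real M) - 1/(2*(x + real M))))
        \<longlonglongrightarrow> Digamma x - ln x + 1/(2*x) + 0"
    by (intro tendsto_intros L lnlim) (use x in auto)
  also have "(\<lambda>M. (ln (real M) - (\<Sum>n<M. inverse (x + real n))) - ln x + 1/(2*x)
           + (ln (x + real M) - ln (real M) - 1/(2*(x + real M)))) = b"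
    by (rule ext) (simp add: bid)
  finally have bl: "b \<longlonglongrightarrow> Digamma x - ln x + 1/(2*x)" by simp
  have bb: "\<bar>b M\<bar> \<le> 1/(2*x^2)" for M
  proof -
    let ?F = "\<lambda>k::nat. 1/(2*(x + real k-1/2)^2)"
    have "\<bar>b M\<bar> \<le> (\<Sum>n<M. \<bar>d (x + real n)\<bar>)" unfolding b_def by (rule sum_abs)
    also have "\<dots> \<le> (\<Sum>n<M. (1/4) * (?F n - ?F (Suc n)))"
    proof (intro sum_mono)
      fix n assume "n \<in> {..<M}"
      have "\<bar>d (x + real n)\<bar> \<le> 1/(4*(x+real n)^3)"
        unfolding d_def using delta_bound[of "x + real n"] x by simp
      also have "\<dots> = (1/4) * (1/(x+real n)^3)" by simp
      also have "\<dots> \<le> (1/4) * (?F n - ?F (Suc n))"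
        using tel3[of "x + real n"] x by (intro mult_left_mono) (auto simp: algebra_simps)
      finally show "\<bar>d (x + real n)\<bar> \<le> (1/4) * (?F n - ?F (Suc n))" .
    qed
    also have "\<dots> = (1/4) * (?F 0 - ?F M)"
      unfolding sum_distrib_left[symmetric] by (subst sum_lessThan_telescope') simp
    also have "\<dots> \<le> (1/4) * ?F 0" by simp
    also have "?F 0 \<le> 2/x^2"
    proof -
      have "(x/2)^2 \<le> (x - 1/2)^2" using x by (intro power_mono) auto
      hence "1/(2*(x-1/2)^2) \<le> 1/(2*(x/2)^2)" using x
        by (intro divide_left_mono mult_left_mono) auto
      thus ?thesis by (simp add: power2_eq_square)
    qed
    finally show ?thesis by simp
  qed
  have "(\<lambda>M. \<bar>b M\<bar>) \<longlonglongrightarrow> \<bar>Digamma x - ln x + 1/(2*x)\<bar>" by (intro tendsto_rabs bl)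
  thus ?thesis using bb by (intro LIMSEQ_le_const2[of "\<lambda>M. \<bar>b M\<bar>"]) auto
qed


lemma eta_bound:
  fixes k :: real assumes k: "k \<ge> 1"
  shows "\<bar>(k+1/2)*(ln (k+1) - ln k) - 1\<bar> \<le> 1/k - 1/(k+1)"
proof -
  have d: "\<bar>ln (k+1) - ln k - (1/k + 1/(k+1))/2\<bar> \<le> 1/(4*k^3)" using delta_bound[of k] k by simp
  have e1: "(k+1/2)*((1/k + 1/(k+1))/2) - 1 = 1/(4*k*(k+1))"
    using k apply (subgoal_tac "k \<noteq> 0" "k+1 \<noteq> 0")
    apply (simp add: divide_simps)
    apply (simp add: algebra_simps)
    by auto
  have "(k+1/2)*(ln (k+1) - ln k) - 1 = (k+1/2)*(ln (k+1) - ln k - (1/k + 1/(k+1))/2) + 1/(4*k*(k+1))"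
    using e1 by (simp add: algebra_simps)
  hence "\<bar>(k+1/2)*(ln (k+1) - ln k) - 1\<bar> \<le> \<bar>(k+1/2)*(ln (k+1) - ln k - (1/k + 1/(k+1))/2)\<bar> + \<bar>1/(4*k*(k+1))\<bar>"
    by (metis abs_triangle_ineq)
  also have "\<dots> = (k+1/2)*\<bar>ln (k+1) - ln k - (1/k + 1/(k+1))/2\<bar> + 1/(4*k*(k+1))"
    using k by (simp add: abs_mult)
  also have "\<dots> \<le> (k+1/2)*(1/(4*k^3)) + 1/(4*k*(k+1))"
    using d k by (intro add_mono mult_left_mono) auto
  also have "\<dots> \<le> 1/k - 1/(k+1)"
  proof -
    have "(k+1/2)*(1/(4*k^3)) + 1/(4*k*(k+1)) = ((k+1/2)*(k+1) + k^2) / (4*k^3*(k+1))"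
      using k apply (subgoal_tac "k \<noteq> 0" "k+1 \<noteq> 0")
      apply (simp add: divide_simps)
      apply (simp add: algebra_simps power3_eq_cube power2_eq_square)
      by auto
    also have "\<dots> \<le> (4*k^2) / (4*k^3*(k+1))"
    proof (intro divide_right_mono)
      have ge: "(k-1)*(2*k+1/2) \<ge> 0" using k by (intro mult_nonneg_nonneg) auto
      have eq: "4*k^2 - ((k+1/2)*(k+1) + k^2) = (k-1)*(2*k+1/2)" by (simp add: field_simps power2_eq_square)
      show "(k+1/2)*(k+1) + k^2 \<le> 4*k^2" using ge eq by (smt (verit))
    qed (use k in auto)
    also have "\<dots> = 1/k - 1/(k+1)"
      using k apply (subgoal_tac "k \<noteq> 0" "k+1 \<noteq> 0")
      apply (simp add: divide_simps)
      apply (simp add: algebra_simps power3_eq_cube power2_eq_square)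
      by auto
    finally show ?thesis .
  qed
  finally show ?thesis .
qed

lemma harm_step_bound:
  fixes k :: real assumes k: "k \<ge> 1"
  shows "0 \<le> ln (k+1) - ln k - 1/(k+1)" "ln (k+1) - ln k - 1/(k+1) \<le> 1/k - 1/(k+1)"
proof -
  have "ln (k+1) - ln k \<ge> 2/(2*k+1)" using ln_inverse_approx_ge[of k "k+1"] k by simp
  moreover have "2/(2*k+1) \<ge> 1/(k+1)" using k by (simp add: divide_simps)
  ultimately show "0 \<le> ln (k+1) - ln k - 1/(k+1)" by linarith
  show "ln (k+1) - ln k - 1/(k+1) \<le> 1/k - 1/(k+1)" using ln_diff_le_inverse[of k] k by simp
qed

lemma tele_sum_bound:
  fixes e :: "nat \<Rightarrow> real" assumes m: "1 \<le> m" "m \<le> n" and c: "c \<ge> 0"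
    and b: "\<And>j. m < j \<Longrightarrow> j \<le> n \<Longrightarrow> \<bar>e j\<bar> \<le> c * (1/real (j-1) - 1/real j)"
  shows "\<bar>\<Sum>j\<in>{Suc m..n}. e j\<bar> \<le> c / real m"
proof -
  have "\<bar>\<Sum>j\<in>{Suc m..n'}. e j\<bar> \<le> c * (1/real m - 1/real n')" if "m \<le> n'" "n' \<le> n" for n'
    using that
  proof (induction n' rule: dec_induct)
    case base then show ?case by simp
  next
    case (step q)
    have "(\<Sum>j\<in>{Suc m..Suc q}. e j) = (\<Sum>j\<in>{Suc m..q}. e j) + e (Suc q)"
      using step by (simp add: sum.atLeast_Suc_atMost_Suc_shift)
    hence "\<bar>\<Sum>j\<in>{Suc m..Suc q}. e j\<bar> \<le> \<bar>\<Sum>j\<in>{Suc m..q}. e j\<bar> + \<bar>e (Suc q)\<bar>" by simp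
    also have "\<dots> \<le> c * (1/real m - 1/real q) + c * (1/real q - 1/real (Suc q))"
      using step b[of "Suc q"] by (intro add_mono) auto
    finally show ?case by (simp add: algebra_simps)
  qed
  from this[of n] m have "\<bar>\<Sum>j\<in>{Suc m..n}. e j\<bar> \<le> c * (1/real m - 1/real n)" by simp
  also have "\<dots> \<le> c * (1/real m)" using c m by (intro mult_left_mono) auto
  finally show ?thesis by simp
qed


lemma tele_id:
  fixes f :: "nat \<Rightarrow> real" assumes "m \<le> n"
  shows "(\<Sum>j\<in>{Suc m..n}. f j - f (j-1)) = f n - f m"
  using assms
proof (induction n rule: dec_induct)
  case (step q)
  have "(\<Sum>j\<in>{Suc m..Suc q}. f j - f (j-1)) = (\<Sum>j\<in>{Suc m..q}. f j - f (j-1)) + (f (Suc q) - f q)"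
    using step by (simp add: sum.atLeast_Suc_atMost_Suc_shift)
  thus ?case using step by simp
qed simp

lemma S2_bound:
  fixes m n :: nat assumes m: "1 \<le> m" "m \<le> n"
  shows "\<bar>(\<Sum>j\<in>{Suc m..n}. Polygamma 1 (real j/2)) - 2*(ln n - ln m)\<bar> \<le> 4 / real m"
proof -
  define e1 where "e1 = (\<lambda>j::nat. Polygamma 1 (real j/2) - 2/real j)"
  define e2 where "e2 = (\<lambda>j::nat. ln (real j) - ln (real (j-1)) - 1/real j)"
  have b1: "\<bar>\<Sum>j\<in>{Suc m..n}. e1 j\<bar> \<le> 2 / real m"
  proof (rule tele_sum_bound[OF m])
    fix j assume j: "m < j" "j \<le> n"
    have jj: "real j \<ge> 2" using j m by linarith
    have "Polygamma 1 (real j/2) \<le> 1/(real j/2 - 1/2)" using psi1_bounds(1)[of "real j/2"] jj by simp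
    also have "1/(real j/2 - 1/2) = 2/real (j-1)" using j m by (simp add: of_nat_diff field_simps)
    finally have u: "Polygamma 1 (real j/2) \<le> 2/real (j-1)" .
    have l: "Polygamma 1 (real j/2) \<ge> 2/real j" using psi1_bounds(2)[of "real j/2"] jj by simp
    show "\<bar>e1 j\<bar> \<le> 2 * (1/real (j-1) - 1/real j)" using u l unfolding e1_def by auto
  qed simp
  have b2: "\<bar>\<Sum>j\<in>{Suc m..n}. e2 j\<bar> \<le> 1 / real m"
  proof (rule tele_sum_bound[OF m])
    fix j assume j: "m < j" "j \<le> n"
    have jj: "real (j-1) \<ge> 1" "real j = real (j-1) + 1" using j m by (auto simp: of_nat_diff)
    show "\<bar>e2 j\<bar> \<le> 1 * (1/real (j-1) - 1/real j)"
      using harm_step_bound[OF jj(1)] unfolding e2_def jj(2) by auto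
  qed simp
  define D where "D = (\<lambda>j::nat. ln (real j) - ln (real (j-1)))"
  have t: "(\<Sum>j\<in>{Suc m..n}. D j) = ln n - ln m"
    using tele_id[OF m(2), of "\<lambda>j. ln (real j)"] by (simp add: D_def)
  have "(\<Sum>j\<in>{Suc m..n}. Polygamma 1 (real j/2)) = (\<Sum>j\<in>{Suc m..n}. e1 j + 2*(D j - e2 j))"
    by (intro sum.cong) (auto simp: e1_def e2_def D_def)
  also have "\<dots> = (\<Sum>j\<in>{Suc m..n}. e1 j) + 2*(\<Sum>j\<in>{Suc m..n}. D j) - 2*(\<Sum>j\<in>{Suc m..n}. e2 j)"
    by (simp add: sum.distrib sum_subtractf sum_distrib_left)
  finally show ?thesis using b1 b2 t by simp
qed

lemma S1_bound:
  fixes m n :: nat assumes m: "1 \<le> m" "m \<le> n"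
  shows "\<bar>(\<Sum>j\<in>{Suc m..n}. Digamma (real j/2)) - (real (n-m)*(ln n - 1 - ln 2) + (real m - 1/2)*(ln n - ln m))\<bar> \<le> 4 / real m"
proof -
  define h where "h = (\<lambda>k::nat. (real k + 1/2)*ln (real k) - real k)"
  define e1 where "e1 = (\<lambda>j::nat. Digamma (real j/2) - ln (real j/2) + 1/real j)"
  define e2 where "e2 = (\<lambda>j::nat. ln (real j) - ln (real (j-1)) - 1/real j)"
  define e3 where "e3 = (\<lambda>j::nat. ln (real j) - (h j - h (j-1)))"
  have b1: "\<bar>\<Sum>j\<in>{Suc m..n}. e1 j\<bar> \<le> 2 / real m"
  proof (rule tele_sum_bound[OF m])
    fix j assume j: "m < j" "j \<le> n"
    have jj: "real j \<ge> 2" using j m by linarith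
    have "\<bar>e1 j\<bar> \<le> 1/(2*(real j/2)^2)" unfolding e1_def using digamma_approx[of "real j/2"] jj by simp
    also have "\<dots> = 2/(real j * real j)" by (simp add: power2_eq_square)
    also have "\<dots> \<le> 2/(real (j-1) * real j)" using j m jj
      by (intro divide_left_mono mult_right_mono) (auto simp: of_nat_diff)
    also have "\<dots> = 2 * (1/real (j-1) - 1/real j)" using j m by (simp add: of_nat_diff field_simps)
    finally show "\<bar>e1 j\<bar> \<le> 2 * (1/real (j-1) - 1/real j)" .
  qed simp
  have b2: "\<bar>\<Sum>j\<in>{Suc m..n}. e2 j\<bar> \<le> 1 / real m"
  proof (rule tele_sum_bound[OF m])
    fix j assume j: "m < j" "j \<le> n"
    have jj: "real (j-1) \<ge> 1" "real j = real (j-1) + 1" using j m by (auto simp: of_nat_diff)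
    show "\<bar>e2 j\<bar> \<le> 1 * (1/real (j-1) - 1/real j)"
      using harm_step_bound[OF jj(1)] unfolding e2_def jj(2) by auto
  qed simp
  have b3: "\<bar>\<Sum>j\<in>{Suc m..n}. e3 j\<bar> \<le> 1 / real m"
  proof (rule tele_sum_bound[OF m])
    fix j assume j: "m < j" "j \<le> n"
    define k where "k = real (j-1)"
    have jj: "k \<ge> 1" "real j = k + 1" using j m by (auto simp: of_nat_diff k_def)
    have "e3 j = - ((k+1/2)*(ln (k+1) - ln k) - 1)"
      unfolding e3_def h_def jj(2) k_def[symmetric] by (simp add: algebra_simps)
    thus "\<bar>e3 j\<bar> \<le> 1 * (1/real (j-1) - 1/real j)"
      using eta_bound[OF jj(1)] unfolding jj(2) k_def[symmetric] by simp
  qed simp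
  define D where "D = (\<lambda>j::nat. ln (real j) - ln (real (j-1)))"
  define Dh where "Dh = (\<lambda>j::nat. h j - h (j-1))"
  have t1: "(\<Sum>j\<in>{Suc m..n}. D j) = ln n - ln m"
    using tele_id[OF m(2), of "\<lambda>j. ln (real j)"] by (simp add: D_def)
  have t2: "(\<Sum>j\<in>{Suc m..n}. Dh j) = h n - h m"
    using tele_id[OF m(2), of h] by (simp add: Dh_def)
  have card: "(\<Sum>j\<in>{Suc m..n}. ln (2::real)) = real (n-m) * ln 2" by simp
  have "(\<Sum>j\<in>{Suc m..n}. Digamma (real j/2)) =
        (\<Sum>j\<in>{Suc m..n}. e1 j + (e3 j + Dh j) - ln 2 - (D j - e2 j))"
    by (intro sum.cong refl) (auto simp: e1_def e2_def e3_def D_def Dh_def ln_div)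
  also have "\<dots> = (\<Sum>j\<in>{Suc m..n}. e1 j) + (\<Sum>j\<in>{Suc m..n}. e3 j) + (\<Sum>j\<in>{Suc m..n}. Dh j) - (\<Sum>j\<in>{Suc m..n}. ln (2::real))
                  - (\<Sum>j\<in>{Suc m..n}. D j) + (\<Sum>j\<in>{Suc m..n}. e2 j)"
    by (simp add: sum.distrib sum_subtractf)
  also have "\<dots> = (\<Sum>j\<in>{Suc m..n}. e1 j) + (\<Sum>j\<in>{Suc m..n}. e3 j) + (h n - h m) - real (n-m) * ln 2
                  - (ln n - ln m) + (\<Sum>j\<in>{Suc m..n}. e2 j)"
    by (simp only: t1 t2 card)
  also have "h n - h m = real (n-m) * (ln n - 1) + (real m + 1/2) * (ln n - ln m)"
    using m by (simp add: h_def of_nat_diff algebra_simps)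
  finally show ?thesis using b1 b2 b3 by (simp add: algebra_simps)
qed


lemma taylor_term:
  fixes a u e :: real assumes e: "e > 0" and ae: "\<And>\<xi>. \<bar>\<xi>\<bar> \<le> \<bar>u\<bar> \<Longrightarrow> a + \<xi> - 1/2 \<ge> e"
  shows "\<bar>ln_Gamma (a+u) - ln_Gamma a - u * Digamma a - u^2/2 * Polygamma 1 a\<bar> \<le> \<bar>u\<bar>^3 / (6*e^2)"
proof -
  define diff where "diff = (\<lambda>k::nat. \<lambda>v::real. if k = 0 then ln_Gamma (a+v) else Polygamma (k-1) (a+v))"
  have pos: "a + v > 0" if "\<bar>v\<bar> \<le> \<bar>u\<bar>" for v using ae[OF that] e by linarith
  have "\<exists>t. \<bar>t\<bar> \<le> \<bar>u\<bar> \<and> (\<lambda>v. ln_Gamma (a+v)) u =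
          (\<Sum>k<3. diff k 0 / fact k * u ^ k) + diff 3 t / fact 3 * u ^ 3"
  proof (rule Maclaurin_bi_le)
    show "diff 0 = (\<lambda>v. ln_Gamma (a+v))" by (simp add: diff_def)
    show "\<forall>k t. k < 3 \<and> \<bar>t\<bar> \<le> \<bar>u\<bar> \<longrightarrow> (diff k has_real_derivative diff (Suc k) t) (at t)"
    proof (intro allI impI, elim conjE)
      fix k t assume k: "k < (3::nat)" and t: "\<bar>t\<bar> \<le> \<bar>u\<bar>"
      have at: "a + t > 0" using pos[OF t] .
      have ni: "a + t \<notin> \<int>\<^sub>\<le>\<^sub>0" using at by (auto elim!: nonpos_Ints_cases)
      show "(diff k has_real_derivative diff (Suc k) t) (at t)"
      proof (cases "k = 0")
        case True
        have "((\<lambda>v. ln_Gamma (a+v)) has_real_derivative Digamma (a+t) * 1) (at t)"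
          by (rule DERIV_chain2[where f=ln_Gamma and g="\<lambda>v. a+v"])
             (auto intro!: derivative_eq_intros has_field_derivative_ln_Gamma_real at)
        thus ?thesis using True by (simp add: diff_def)
      next
        case False
        have "((\<lambda>v. Polygamma (k-1) (a+v)) has_real_derivative Polygamma (Suc (k-1)) (a+t) * 1) (at t)"
          by (rule DERIV_chain2[where f="Polygamma (k-1)" and g="\<lambda>v. a+v"])
             (auto intro!: derivative_eq_intros has_field_derivative_Polygamma ni)
        thus ?thesis using False by (simp add: diff_def)
      qed
    qed
  qed
  then obtain \<xi> where xi: "\<bar>\<xi>\<bar> \<le> \<bar>u\<bar>"
    and eq: "ln_Gamma (a+u) = (\<Sum>k<3. diff k 0 / fact k * u ^ k) + diff 3 \<xi> / fact 3 * u ^ 3" by auto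
  have s3: "(\<Sum>k<3. diff k 0 / fact k * u ^ k) = ln_Gamma a + Digamma a * u + Polygamma 1 a / 2 * u^2"
    by (simp add: diff_def eval_nat_numeral)
  have "ln_Gamma (a+u) - ln_Gamma a - u * Digamma a - u^2/2 * Polygamma 1 a = Polygamma 2 (a+\<xi>) / 6 * u^3"
    using eq s3 by (simp add: diff_def eval_nat_numeral algebra_simps)
  also have "\<bar>\<dots>\<bar> = \<bar>Polygamma 2 (a+\<xi>)\<bar> * \<bar>u\<bar>^3 / 6" by (simp add: abs_mult power_abs)
  also have "\<dots> \<le> (1/e^2) * \<bar>u\<bar>^3 / 6"
  proof -
    have "\<bar>Polygamma 2 (a+\<xi>)\<bar> \<le> 1/(a+\<xi>-1/2)^2" using psi2_bound[of "a+\<xi>"] ae[OF xi] e by simp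
    also have "\<dots> \<le> 1/e^2" using ae[OF xi] e by (intro divide_left_mono power_mono) auto
    finally show ?thesis by (intro divide_right_mono mult_right_mono) auto
  qed
  finally show ?thesis by simp
qed

lemma inv_sq_sum:
  fixes m n :: nat assumes m: "1 \<le> m" "m \<le> n"
  shows "(\<Sum>j\<in>{Suc m..n}. 1/real j^2) \<le> 1/real m"
proof -
  have "\<bar>\<Sum>j\<in>{Suc m..n}. 1/real j^2\<bar> \<le> 1/real m"
  proof (rule tele_sum_bound[OF m])
    fix j assume j: "m < j" "j \<le> n"
    have jj: "real j \<ge> 2" using j m by linarith
    have "1/real j^2 \<le> 1/(real (j-1) * real j)" using j m jj
      by (auto simp: of_nat_diff power2_eq_square intro!: divide_left_mono mult_right_mono)
    also have "\<dots> = 1/real (j-1) - 1/real j" using j m by (simp add: of_nat_diff field_simps)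
    finally show "\<bar>1/real j^2\<bar> \<le> 1 * (1/real (j-1) - 1/real j)" by simp
  qed simp
  thus ?thesis by simp
qed


lemma abs4: fixes a b c d A B C D :: real
  shows "\<bar>a\<bar> \<le> A \<Longrightarrow> \<bar>b\<bar> \<le> B \<Longrightarrow> \<bar>c\<bar> \<le> C \<Longrightarrow> \<bar>d\<bar> \<le> D \<Longrightarrow> \<bar>a+b+c-d\<bar> \<le> A+B+C+D"
  by arith

lemma T_sum_bound:
  fixes m n :: nat and u :: real assumes m: "1 \<le> m" "m \<le> n" and ub: "\<bar>u\<bar> \<le> real m/4"
  shows "\<bar>\<Sum>j\<in>{Suc m..n}. ln_Gamma (real j/2+u) - ln_Gamma (real j/2) - u * Digamma (real j/2) - u^2/2 * Polygamma 1 (real j/2)\<bar>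
         \<le> 11 * \<bar>u\<bar>^3 / real m"
proof -
  have "\<bar>\<Sum>j\<in>{Suc m..n}. ln_Gamma (real j/2+u) - ln_Gamma (real j/2) - u * Digamma (real j/2) - u^2/2 * Polygamma 1 (real j/2)\<bar>
     \<le> (\<Sum>j\<in>{Suc m..n}. \<bar>ln_Gamma (real j/2+u) - ln_Gamma (real j/2) - u * Digamma (real j/2) - u^2/2 * Polygamma 1 (real j/2)\<bar>)"
    by (rule sum_abs)
  also have "\<dots> \<le> (\<Sum>j\<in>{Suc m..n}. (32/3 * \<bar>u\<bar>^3) * (1/real j^2))"
  proof (rule sum_mono)
    fix j assume "j \<in> {Suc m..n}"
    hence j: "m < j" "j \<le> n" by auto
    have jj: "real j \<ge> 2" "real m \<le> real j - 1" using j m by linarith+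
    have "\<bar>ln_Gamma (real j/2+u) - ln_Gamma (real j/2) - u * Digamma (real j/2) - u^2/2 * Polygamma 1 (real j/2)\<bar>
          \<le> \<bar>u\<bar>^3 / (6*(real j/8)^2)"
    proof (rule taylor_term)
      show "real j/8 > 0" using jj by simp
      fix \<xi> :: real assume "\<bar>\<xi>\<bar> \<le> \<bar>u\<bar>"
      thus "real j/2 + \<xi> - 1/2 \<ge> real j/8" using ub jj by linarith
    qed
    also have "\<dots> = (32/3 * \<bar>u\<bar>^3) * (1/real j^2)" by (simp add: power2_eq_square)
    finally show "\<bar>ln_Gamma (real j/2+u) - ln_Gamma (real j/2) - u * Digamma (real j/2) - u^2/2 * Polygamma 1 (real j/2)\<bar>
          \<le> (32/3 * \<bar>u\<bar>^3) * (1/real j^2)" .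
  qed
  also have "\<dots> = (32/3 * \<bar>u\<bar>^3) * (\<Sum>j\<in>{Suc m..n}. 1/real j^2)" by (simp add: sum_distrib_left)
  also have "\<dots> \<le> (32/3 * \<bar>u\<bar>^3) * (1/real m)" by (intro mult_left_mono inv_sq_sum m) auto
  also have "\<dots> \<le> 11 * \<bar>u\<bar>^3 / real m" using m by (simp add: divide_simps)
  finally show ?thesis .
qed

lemma main_bound:
  fixes n m :: nat and t s :: real
  assumes m: "1 \<le> m" "m \<le> n" and tb: "\<bar>t\<bar> \<le> real m/4" and sb: "\<bar>s\<bar> \<le> real m/4"
  shows "\<bar>(\<Sum>j\<in>{Suc m..n}. ln_Gamma (real j/2+t) - ln_Gamma (real j/2+s))
          - (real (n-m)*(t-s)*(ln n - 1 - ln 2) + (ln n - ln m)*((t^2-s^2) - (real (n-m) - real n + 1/2)*(t-s)))\<bar>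
         \<le> (4*\<bar>t-s\<bar> + 2*\<bar>t^2-s^2\<bar> + 11*(\<bar>t\<bar>^3+\<bar>s\<bar>^3)) / real m"
proof -
  define T where "T = (\<lambda>u j. ln_Gamma (real j/2+u) - ln_Gamma (real j/2) - u * Digamma (real j/2) - u^2/2 * Polygamma 1 (real j/2))"
  define P0 where "P0 = (\<lambda>j::nat. Digamma (real j/2))"
  define P1 where "P1 = (\<lambda>j::nat. Polygamma 1 (real j/2))"
  define S1 where "S1 = (\<Sum>j\<in>{Suc m..n}. P0 j)"
  define S2 where "S2 = (\<Sum>j\<in>{Suc m..n}. P1 j)"
  define A1 where "A1 = real (n-m)*(ln n - 1 - ln 2) + (real m - 1/2)*(ln n - ln m)"
  define R where "R = ln (real n) - ln (real m)"
  have h1: "\<bar>S1 - A1\<bar> \<le> 4 / real m" using S1_bound[OF m] by (simp add: S1_def A1_def P0_def)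
  have h2: "\<bar>S2 - 2*R\<bar> \<le> 4 / real m" using S2_bound[OF m] by (simp add: S2_def R_def P1_def)
  have h3: "\<bar>\<Sum>j\<in>{Suc m..n}. T t j\<bar> \<le> 11 * \<bar>t\<bar>^3 / real m" using T_sum_bound[OF m tb] by (simp add: T_def)
  have h4: "\<bar>\<Sum>j\<in>{Suc m..n}. T s j\<bar> \<le> 11 * \<bar>s\<bar>^3 / real m" using T_sum_bound[OF m sb] by (simp add: T_def)
  have "(\<Sum>j\<in>{Suc m..n}. ln_Gamma (real j/2+t) - ln_Gamma (real j/2+s))
        = (\<Sum>j\<in>{Suc m..n}. (t-s) * P0 j + ((t^2-s^2)/2) * P1 j + T t j - T s j)"
    by (intro sum.cong refl) (simp add: T_def P0_def P1_def field_simps)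
  also have "\<dots> = (t-s) * S1 + ((t^2-s^2)/2) * S2 + (\<Sum>j\<in>{Suc m..n}. T t j) - (\<Sum>j\<in>{Suc m..n}. T s j)"
    by (simp add: S1_def S2_def sum.distrib sum_subtractf sum_distrib_left)
  finally have E: "(\<Sum>j\<in>{Suc m..n}. ln_Gamma (real j/2+t) - ln_Gamma (real j/2+s)) = \<dots>" .
  have tgt: "real (n-m)*(t-s)*(ln n - 1 - ln 2) + (ln n - ln m)*((t^2-s^2) - (real (n-m) - real n + 1/2)*(t-s))
             = (t-s) * A1 + ((t^2-s^2)/2) * (2*R)"
    using m by (simp add: A1_def R_def of_nat_diff field_simps)
  have k1: "\<bar>(t-s) * (S1 - A1)\<bar> \<le> \<bar>t-s\<bar> * (4 / real m)"
    unfolding abs_mult by (rule mult_left_mono[OF h1]) simp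
  have k2: "\<bar>((t^2-s^2)/2) * (S2 - 2*R)\<bar> \<le> \<bar>(t^2-s^2)/2\<bar> * (4 / real m)"
    unfolding abs_mult by (rule mult_left_mono[OF h2]) simp
  have k3: "\<bar>(t^2-s^2)/2\<bar> = \<bar>t^2-s^2\<bar>/2" by simp
  have "\<bar>(t-s) * (S1 - A1) + ((t^2-s^2)/2) * (S2 - 2*R) + (\<Sum>j\<in>{Suc m..n}. T t j) - (\<Sum>j\<in>{Suc m..n}. T s j)\<bar>
      \<le> \<bar>t-s\<bar> * (4 / real m) + (\<bar>t^2-s^2\<bar>/2) * (4 / real m) + 11 * \<bar>t\<bar>^3 / real m + 11 * \<bar>s\<bar>^3 / real m"
    using abs4[OF k1 k2[unfolded k3] h3 h4] by simp
  also have "\<dots> = (4*\<bar>t-s\<bar> + 2*\<bar>t^2-s^2\<bar> + 11*(\<bar>t\<bar>^3+\<bar>s\<bar>^3)) / real m" by (simp add: add_divide_distrib diff_divide_distrib)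
  moreover have X: "((t-s) * S1 + ((t^2-s^2)/2) * S2 + (\<Sum>j\<in>{Suc m..n}. T t j) - (\<Sum>j\<in>{Suc m..n}. T s j))
      - ((t-s) * A1 + ((t^2-s^2)/2) * (2*R))
      = (t-s) * (S1 - A1) + ((t^2-s^2)/2) * (S2 - 2*R) + (\<Sum>j\<in>{Suc m..n}. T t j) - (\<Sum>j\<in>{Suc m..n}. T s j)"
    by (simp add: field_simps)
  ultimately show ?thesis unfolding E tgt X by simp
qed


lemma mvGamma_exp:
  fixes n m p :: nat and u :: real
  assumes "p \<le> n" "m = n - p" "\<bar>u\<bar> \<le> real m/4"
  shows "mvGamma p (real n/2 + u) = pi powr (real p * (real p - 1) / 4) *
            exp (\<Sum>j\<in>{Suc m..n}. ln_Gamma (real j/2 + u))"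
proof -
  have "(\<Prod>i\<in>{1..p}. Gamma (real n/2 + u - (real i - 1) / 2)) = (\<Prod>j\<in>{Suc m..n}. Gamma (real j/2 + u))"
  proof (rule prod.reindex_bij_witness[of _ "\<lambda>j. n+1-j" "\<lambda>i. n+1-i"])
    fix i assume "i \<in> {1..p}"
    with assms show "n + 1 - (n + 1 - i) = i" "n + 1 - i \<in> {Suc m..n}" by auto
    show "Gamma (real (n + 1 - i)/2 + u) = Gamma (real n/2 + u - (real i - 1) / 2)"
    proof -
      have "real (n + 1 - i)/2 + u = real n/2 + u - (real i - 1) / 2"
        using \<open>i \<in> {1..p}\<close> assms by (simp add: of_nat_diff field_simps)
      thus ?thesis by (rule arg_cong[where f=Gamma])
    qed
  next
    fix j assume "j \<in> {Suc m..n}"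
    with assms show "n + 1 - (n + 1 - j) = j" "n + 1 - j \<in> {1..p}" by auto
  qed
  also have "\<dots> = (\<Prod>j\<in>{Suc m..n}. exp (ln_Gamma (real j/2 + u)))"
  proof (rule prod.cong[OF refl])
    fix j assume "j \<in> {Suc m..n}"
    hence "real j/2 + u > 0" using assms by auto
    thus "Gamma (real j/2 + u) = exp (ln_Gamma (real j/2 + u))" by (rule Gamma_real_pos_exp)
  qed
  also have "\<dots> = exp (\<Sum>j\<in>{Suc m..n}. ln_Gamma (real j/2 + u))" by (simp add: exp_sum)
  finally show ?thesis by (simp add: mvGamma_def)
qed

lemma ln_ratio:
  fixes n m p :: nat and t s :: real
  assumes "p \<le> n" "m = n - p" "\<bar>t\<bar> \<le> real m/4" "\<bar>s\<bar> \<le> real m/4"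
  shows "ln (mvGamma p (real n/2 + t) / mvGamma p (real n/2 + s)) =
     (\<Sum>j\<in>{Suc m..n}. ln_Gamma (real j/2+t) - ln_Gamma (real j/2+s))"
  using mvGamma_exp[OF assms(1,2,3)] mvGamma_exp[OF assms(1,2,4)]
  by (simp add: exp_diff[symmetric] sum_subtractf)


lemma Nbound:
  fixes t s a C b :: real
  assumes t: "\<bar>t\<bar> \<le> C*a" and s: "\<bar>s\<bar> \<le> C*a" and a: "0 \<le> a" "a \<le> b" and C: "0 \<le> C"
  shows "4*\<bar>t-s\<bar> + 2*\<bar>t^2-s^2\<bar> + 11*(\<bar>t\<bar>^3+\<bar>s\<bar>^3) \<le> (8*C + 4*C^2*b + 22*C^3*b^2) * a"
proof -
  have b: "0 \<le> b" using a by linarith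
  have 1: "\<bar>t-s\<bar> \<le> 2*C*a" using t s by linarith
  have sq: "\<bar>u\<bar>^2 \<le> C^2*b*a" if u: "\<bar>u\<bar> \<le> C*a" for u :: real
  proof -
    have "\<bar>u\<bar>^2 \<le> (C*a)^2" using u by (intro power_mono) auto
    also have "\<dots> = C^2*a*a" by (simp add: power2_eq_square)
    also have "\<dots> \<le> C^2*b*a" using a C by (intro mult_right_mono mult_left_mono) auto
    finally show ?thesis .
  qed
  have cu: "\<bar>u\<bar>^3 \<le> C^3*b^2*a" if u: "\<bar>u\<bar> \<le> C*a" for u :: real
  proof -
    have "\<bar>u\<bar>^3 \<le> (C*a)^3" using u by (intro power_mono) auto
    also have "\<dots> = C^3*(a*a)*a" by (simp add: power3_eq_cube)
    also have "\<dots> \<le> C^3*(b*b)*a" using a C by (intro mult_right_mono mult_left_mono mult_mono) auto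
    finally show ?thesis by (simp add: power2_eq_square)
  qed
  have 2: "\<bar>t^2-s^2\<bar> \<le> \<bar>t\<bar>^2 + \<bar>s\<bar>^2" by (simp add: abs_le_iff)
  have rhs: "(8*C + 4*C^2*b + 22*C^3*b^2) * a = 4*(2*C*a) + 2*(2*(C^2*b*a)) + 11*(2*(C^3*b^2*a))"
    by (simp add: algebra_simps)
  show ?thesis unfolding rhs using 1 2 sq[OF t] sq[OF s] cu[OF t] cu[OF s] by (smt (verit))
qed

lemma inv_mr_tendsto:
  fixes p :: "nat \<Rightarrow> nat" and y :: real
  assumes lt: "eventually (\<lambda>n. p n < n) sequentially"
    and y: "y > 0"
    and ev: "eventually (\<lambda>n. rseq p n \<ge> sqrt (y/2) \<and> (rseq p n)^2 = ln (real n) - ln (real (n - p n))) sequentially"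
  shows "(\<lambda>n. 1 / (real (n - p n) * rseq p n)) \<longlonglongrightarrow> 0"
proof (rule tendstoI)
  fix \<epsilon> :: real assume \<epsilon>: "\<epsilon> > 0"
  define r0 where "r0 = sqrt (y/2)"
  have r0: "r0 > 0" using y by (simp add: r0_def)
  obtain M :: nat where M0: "real M > max 1 (1/(\<epsilon>*r0))"
    using reals_Archimedean2 by blast
  have M: "real M > 1/(\<epsilon>*r0)" "M \<ge> 1" using M0 by auto
  have lnlim: "filterlim (\<lambda>n. ln (real n)) at_top sequentially"
    by (rule filterlim_compose[OF ln_at_top filterlim_real_sequentially])
  have evln: "eventually (\<lambda>n. ln (real n) \<ge> ln (real M) + 1/\<epsilon>^2 + 1) sequentially"
    using lnlim unfolding filterlim_at_top by blast
  show "eventually (\<lambda>n. dist (1 / (real (n - p n) * rseq p n)) 0 < \<epsilon>) sequentially"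
    using lt ev evln
  proof eventually_elim
    case (elim n)
    define m where "m = n - p n"
    have m1: "real m \<ge> 1" using elim by (simp add: m_def)
    have r: "rseq p n \<ge> r0" "(rseq p n)^2 = ln (real n) - ln (real m)" using elim by (auto simp: m_def r0_def)
    have rpos: "rseq p n > 0" using r r0 by linarith
    have pos: "real m * rseq p n > 0" using m1 rpos by simp
    have "1 / (real m * rseq p n) < \<epsilon>"
    proof (cases "m \<ge> M")
      case True
      have "real M * r0 \<le> real m * rseq p n" using True r r0 by (intro mult_mono) auto
      moreover have "1/\<epsilon> < real M * r0" using M(1) r0 \<epsilon> by (simp add: field_simps)
      ultimately have "1/\<epsilon> < real m * rseq p n" by linarith
      thus ?thesis using pos \<epsilon> by (simp add: field_simps)
    next
      case False
      hence "ln (real m) \<le> ln (real M)" using m1 by simp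
      hence "(rseq p n)^2 \<ge> 1/\<epsilon>^2 + 1" using r elim by linarith
      hence "(rseq p n)^2 > (1/\<epsilon>)^2" by (simp add: power_divide)
      hence "rseq p n > 1/\<epsilon>" using power_less_imp_less_base[of "1/\<epsilon>" 2 "rseq p n"] rpos by linarith
      hence "1 / rseq p n < \<epsilon>" using rpos \<epsilon> by (simp add: field_simps)
      moreover have "1 / (real m * rseq p n) \<le> 1 / rseq p n" using m1 rpos
        by (intro divide_left_mono) (auto simp: mult_pos_pos)
      ultimately show ?thesis by linarith
    qed
    moreover have "1 / (real m * rseq p n) > 0" using pos by simp
    ultimately show ?case unfolding m_def[symmetric] dist_real_def by simp
  qed
qed


theorem lemma4:
  fixes p :: "nat \<Rightarrow> nat" and s t :: "nat \<Rightarrow> real" and y :: real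
  assumes "eventually (\<lambda>n. p n < n) sequentially"
    and "y \<in> {0<..1}"
    and "(\<lambda>n. real (p n) / real n) \<longlonglongrightarrow> y"
    and "s \<in> O(\<lambda>n. 1 / rseq p n)"
    and "t \<in> O(\<lambda>n. 1 / rseq p n)"
  shows "(\<lambda>n. ln (mvGamma (p n) (real n / 2 + t n) / mvGamma (p n) (real n / 2 + s n))
            - ( real (p n) * (t n - s n) * (ln (real n) - 1 - ln 2)
              + (rseq p n)\<^sup>2 * ((t n ^ 2 - s n ^ 2)
                   - (real (p n) - real n + 1 / 2) * (t n - s n))))
         \<longlonglongrightarrow> 0"
proof -
  note lt = assms(1)
  have y: "y > 0" using assms(2) by simp
  obtain cs where cs: "cs > 0" "eventually (\<lambda>n. norm (s n) \<le> cs * norm (1 / rseq p n)) sequentially"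
    using assms(4) by (elim landau_o.bigE)
  obtain ct where ct: "ct > 0" "eventually (\<lambda>n. norm (t n) \<le> ct * norm (1 / rseq p n)) sequentially"
    using assms(5) by (elim landau_o.bigE)
  define C where "C = max cs ct"
  have C: "C > 0" using cs ct by (simp add: C_def)
  define r0 where "r0 = sqrt (y/2)"
  have r0: "r0 > 0" using y by (simp add: r0_def)
  have evy: "eventually (\<lambda>n. real (p n) / real n > y/2) sequentially"
    using order_tendstoD(1)[OF assms(3), of "y/2"] y by simp
  have ev: "eventually (\<lambda>n. rseq p n \<ge> sqrt (y/2) \<and> (rseq p n)^2 = ln (real n) - ln (real (n - p n))) sequentially"
    using lt evy
  proof eventually_elim
    case (elim n)
    have n0: "real n > 0" using elim by simp
    have m0: "real (n - p n) > 0" using elim by simp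
    have e1: "1 - real (p n) / real n = real (n - p n) / real n"
      using elim n0 by (simp add: of_nat_diff field_simps)
    have e2: "- ln (1 - real (p n) / real n) = ln (real n) - ln (real (n - p n))"
      unfolding e1 using n0 m0 by (simp add: ln_div)
    have "ln (real (n - p n) / real n) \<le> real (n - p n) / real n - 1"
      using n0 m0 by (intro ln_le_minus_one) simp
    hence ge: "- ln (1 - real (p n) / real n) \<ge> real (p n) / real n"
      unfolding e1 using e1 by linarith
    hence ge2: "- ln (1 - real (p n) / real n) \<ge> y/2" using elim by linarith
    have "rseq p n \<ge> sqrt (y/2)" unfolding rseq_def by (rule real_sqrt_le_mono[OF ge2])
    moreover have "(rseq p n)^2 = ln (real n) - ln (real (n - p n))"
      unfolding rseq_def using ge2 y e2 by simp
    ultimately show ?case by simp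
  qed
  have key: "(\<lambda>n. 1 / (real (n - p n) * rseq p n)) \<longlonglongrightarrow> 0"
    by (rule inv_mr_tendsto[OF lt y ev])
  have evk: "eventually (\<lambda>n. 1 / (real (n - p n) * rseq p n) < 1/(4*C)) sequentially"
    using order_tendstoD(2)[OF key, of "1/(4*C)"] C by simp
  define K where "K = 8*C + 4*C^2*(1/r0) + 22*C^3*(1/r0)^2"
  have bound: "eventually (\<lambda>n. norm (ln (mvGamma (p n) (real n / 2 + t n) / mvGamma (p n) (real n / 2 + s n))
            - ( real (p n) * (t n - s n) * (ln (real n) - 1 - ln 2)
              + (rseq p n)\<^sup>2 * ((t n ^ 2 - s n ^ 2)
                   - (real (p n) - real n + 1 / 2) * (t n - s n)))) \<le> K * (1 / (real (n - p n) * rseq p n))) sequentially"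
    using lt ev evk cs(2) ct(2)
  proof eventually_elim
    case (elim n)
    define m where "m = n - p n"
    define r where "r = rseq p n"
    have m1: "1 \<le> m" "m \<le> n" using elim by (auto simp: m_def)
    have r: "r \<ge> r0" "r^2 = ln (real n) - ln (real m)" using elim by (auto simp: r_def m_def r0_def)
    have rpos: "r > 0" using r r0 by linarith
    have tb: "\<bar>t n\<bar> \<le> C * (1/r)"
    proof -
      have "\<bar>t n\<bar> \<le> ct * (1/r)" using elim rpos by (simp add: r_def)
      also have "\<dots> \<le> C * (1/r)" using rpos by (intro mult_right_mono) (auto simp: C_def)
      finally show ?thesis .
    qed
    have sb: "\<bar>s n\<bar> \<le> C * (1/r)"
    proof -
      have "\<bar>s n\<bar> \<le> cs * (1/r)" using elim rpos by (simp add: r_def)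
      also have "\<dots> \<le> C * (1/r)" using rpos by (intro mult_right_mono) (auto simp: C_def)
      finally show ?thesis .
    qed
    have mr: "1 / (real m * r) < 1/(4*C)" using elim by (simp add: m_def r_def)
    have "C * (1/r) \<le> real m / 4"
    proof -
      have pos: "real m * r > 0" using m1 rpos by simp
      from mr have "4*C < real m * r" using pos C by (simp add: field_simps)
      thus ?thesis using rpos by (simp add: field_simps)
    qed
    hence tb4: "\<bar>t n\<bar> \<le> real m/4" and sb4: "\<bar>s n\<bar> \<le> real m/4" using tb sb by linarith+
    have pn: "p n \<le> n" "real (n - m) = real (p n)" using elim by (auto simp: m_def)
    have L: "ln (mvGamma (p n) (real n / 2 + t n) / mvGamma (p n) (real n / 2 + s n)) =
      (\<Sum>j\<in>{Suc m..n}. ln_Gamma (real j/2 + t n) - ln_Gamma (real j/2 + s n))"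
      by (rule ln_ratio[OF pn(1) m_def tb4 sb4])
    note MB = main_bound[OF m1 tb4 sb4]
    have NB: "4*\<bar>t n - s n\<bar> + 2*\<bar>t n^2 - s n^2\<bar> + 11*(\<bar>t n\<bar>^3+\<bar>s n\<bar>^3) \<le> K * (1/r)"
      unfolding K_def
      by (rule Nbound[OF tb sb]) (use rpos r r0 C in \<open>auto simp: divide_simps\<close>)
    have "norm (ln (mvGamma (p n) (real n / 2 + t n) / mvGamma (p n) (real n / 2 + s n))
            - ( real (p n) * (t n - s n) * (ln (real n) - 1 - ln 2)
              + (rseq p n)\<^sup>2 * ((t n ^ 2 - s n ^ 2)
                   - (real (p n) - real n + 1 / 2) * (t n - s n))))
          \<le> (4*\<bar>t n - s n\<bar> + 2*\<bar>t n^2 - s n^2\<bar> + 11*(\<bar>t n\<bar>^3+\<bar>s n\<bar>^3)) / real m"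
      using MB unfolding L real_norm_def r_def[symmetric] r(2) pn(2) .
    also have "\<dots> \<le> (K * (1/r)) / real m" using m1 NB by (intro divide_right_mono) auto
    also have "\<dots> = K * (1 / (real m * r))" by simp
    finally show ?case by (simp add: m_def r_def)
  qed
  have "(\<lambda>n. K * (1 / (real (n - p n) * rseq p n))) \<longlonglongrightarrow> K * 0"
    by (intro tendsto_mult tendsto_const key)
  hence "(\<lambda>n. K * (1 / (real (n - p n) * rseq p n))) \<longlonglongrightarrow> 0" by simp
  thus ?thesis by (rule Lim_null_comparison[OF bound])
qed

end
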